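(* Let $q>2$ be an integer and $z\geq 2$. Consider the mean-field equation in $u\in[0,1)$, $$u=\frac{1-\exp(\Delta_{\beta,q,z}(u))}{1+(q-1)\exp(\Delta_{\beta,q,z}(u))},\qquad\Delta_{\beta,q,z}(u):=-\frac{\beta}{q^{z-1}}\Big[(1+(q-1)u)^{z-1}-(1-u)^{z-1}\Big].$$ There exist $0<\beta_0(q,z)<\beta_1(q,z)$ such that: for $0<\beta<\beta_0$ the mean-field equation has only the trivial solution $u=0$; for $\beta_0<\beta<\beta_1$ it has exactly two additional solutions $0<u_1<u_2<1$; for $\beta=\beta_0$ or $\beta\geq\beta_1$ it has exactly one additional solution $0<u_2<1$. *)

theory Defs
  imports Complex_Main
begin

definition mf_Delta :: "real \<Rightarrow> nat \<Rightarrow> nat \<Rightarrow> real \<Rightarrow> real" where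
  "mf_Delta \<beta> q z u =
     - (\<beta> / real q ^ (z - 1)) * ((1 + (real q - 1) * u) ^ (z - 1) - (1 - u) ^ (z - 1))"

definition mf_solutions :: "real \<Rightarrow> nat \<Rightarrow> nat \<Rightarrow> real set" where
  "mf_solutions \<beta> q z =
     {u. 0 \<le> u \<and> u < 1 \<and>
         u = (1 - exp (mf_Delta \<beta> q z u)) / (1 + (real q - 1) * exp (mf_Delta \<beta> q z u))}"

end

theory Submission
  imports Defs
begin


definition SS :: "real \<Rightarrow> nat \<Rightarrow> real \<Rightarrow> real" where
  "SS m n t = m*t^n - m + n*m^2*t - n*t^(n-1)"
definition ZZ :: "real \<Rightarrow> nat \<Rightarrow> real \<Rightarrow> real" where
  "ZZ m n t = (1+m*t)*(1-t^n)/(m*t+t^n) + n*ln t"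

lemma aux_frac: fixes X Y B t c :: real
  assumes "B \<noteq> 0" "t \<noteq> 0" "X*t + c*B^2 = Y*t"
  shows "X/B^2 + c/t = Y/B^2"
  using assms by (simp add: field_simps power2_eq_square)

lemma ZZ_deriv:
  assumes "0 < t" "m \<ge> 0" "n \<ge> 1"
  shows "(ZZ m n has_real_derivative (1-t^n)*SS m n t/(m*t+t^n)^2) (at t)"
proof -
  obtain k where n: "n = Suc k" using assms(3) by (cases n) auto
  have B: "m*t+t^n > 0" using assms by (simp add: add_nonneg_pos)
  have "((\<lambda>t. (1+m*t)*(1-t^n)/(m*t+t^n) + n*ln t) has_real_derivative
     ((m*(1-t^n) + (1+m*t)*(-(n*t^(n-1))))*(m*t+t^n) - (1+m*t)*(1-t^n)*(m + n*t^(n-1)))/(m*t+t^n)^2 + n/t) (at t)"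
    using B assms
    by (auto intro!: derivative_eq_intros simp: power2_eq_square)
  moreover have "((m*(1-t^n) + (1+m*t)*(-(n*t^(n-1))))*(m*t+t^n) - (1+m*t)*(1-t^n)*(m + n*t^(n-1)))/(m*t+t^n)^2 + n/t
      = (1-t^n)*SS m n t/(m*t+t^n)^2"
    apply (rule aux_frac)
    using B assms apply simp_all
    unfolding SS_def n by (simp add: algebra_simps power2_eq_square)
  ultimately show ?thesis unfolding ZZ_def[abs_def] by simp
qed

definition KK :: "real \<Rightarrow> nat \<Rightarrow> real \<Rightarrow> real" where
  "KK m n t = - ln t * (1+m*t)^n/(1-t^n)"

lemma aux_frac2: fixes N D t R :: real
  assumes "D \<noteq> 0" "t \<noteq> 0" "N*t = R"
  shows "N/D^2 = R/(t*D^2)"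
  using assms by (simp add: field_simps power2_eq_square)

lemma KK_deriv:
  assumes "0 < t" "t < 1" "m \<ge> 0" "n \<ge> 1"
  shows "(KK m n has_real_derivative
     - ((1+m*t)^(n-1)*(m*t+t^n)*ZZ m n t)/(t*(1-t^n)^2)) (at t)"
proof -
  obtain k where n: "n = Suc k" using assms(4) by (cases n) auto
  have B: "m*t+t^n > 0" using assms by (simp add: add_nonneg_pos)
  have tn: "t^n < 1" using assms by (simp add: power_less_one_iff)
  have "((\<lambda>t. - ln t * (1+m*t)^n/(1-t^n)) has_real_derivative
     ((-(1/t)*(1+m*t)^n - ln t*(n*(1+m*t)^(n-1)*m))*(1-t^n) - (- ln t*(1+m*t)^n)*(-(n*t^(n-1))))/(1-t^n)^2) (at t)"
    using B assms tn
    by (auto intro!: derivative_eq_intros simp: power2_eq_square) (simp_all add: field_simps; simp only: minus_divide_left; simp add: algebra_simps)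
  moreover have "((-(1/t)*(1+m*t)^n - ln t*(n*(1+m*t)^(n-1)*m))*(1-t^n) - (- ln t*(1+m*t)^n)*(-(n*t^(n-1))))/(1-t^n)^2
     = - ((1+m*t)^(n-1)*(m*t+t^n)*ZZ m n t)/(t*(1-t^n)^2)"
    apply (rule aux_frac2)
    using B assms tn apply simp_all
    unfolding ZZ_def using B assms
    by (simp add: n field_simps)
  ultimately show ?thesis unfolding KK_def[abs_def] by simp
qed


lemma S_lower:
  assumes "m \<ge> 0" "0 \<le> t" "n \<ge> 1"
  shows "SS m n t \<ge> n*(m*t*(m+1) - m - t^(n-1))"
proof -
  have "1 + real n * (t - 1) \<le> (1 + (t-1))^n"
    by (rule Bernoulli_inequality) (use assms in auto)
  hence "m*(1 + real n * (t - 1)) \<le> m*t^n" using assms by (simp add: mult_left_mono)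
  thus ?thesis unfolding SS_def by (simp add: algebra_simps power2_eq_square)
qed

lemma S_pos:
  assumes "m \<ge> 2" "1/m < t" "t \<le> 1" "n \<ge> 1"
  shows "SS m n t > 0"
proof -
  have t0: "t > 0" using assms by (smt (verit) divide_pos_pos)
  have "m*t > 1" using assms by (simp add: field_simps)
  hence a: "m*t*(m+1) > m+1" using assms by simp
  have "t^(n-1) \<le> 1" using assms t0 by (simp add: power_le_one)
  hence "m*t*(m+1) - m - t^(n-1) > 0" using a by linarith
  hence "n*(m*t*(m+1) - m - t^(n-1)) > 0" using assms by simp
  with S_lower[of m t n] assms t0 show ?thesis by linarith
qed

lemma S_nonneg:
  assumes "m \<ge> 2" "n \<ge> 1"
  shows "SS m n (1/m) \<ge> 0"
proof -
  have "(1/m)^(n-1) \<le> 1" using assms by (simp add: power_le_one)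
  hence "m*(1/m)*(m+1) - m - (1/m)^(n-1) \<ge> 0" using assms by simp
  hence "n*(m*(1/m)*(m+1) - m - (1/m)^(n-1)) \<ge> 0" using assms by simp
  with S_lower[of m "1/m" n] assms show ?thesis by simp
qed

lemma S_neg0:
  assumes "m \<ge> 2" "n \<ge> 1"
  shows "SS m n 0 < 0"
  using assms unfolding SS_def by (cases "n = 1") (auto simp: power_0_left)

lemma S_deriv:
  fixes m t :: real
  assumes "n = Suc k"
  shows "(SS m n has_real_derivative m*n*t^k + n*m^2 - n*(k*t^(k-1))) (at t)"
proof -
  have e: "t^k + real k * t^(k - Suc 0) * t = (1 + real k) * t^k"
    by (cases k) (auto simp: algebra_simps)
  show ?thesis
  unfolding SS_def[abs_def] assms
  apply (auto intro!: derivative_eq_intros simp: e algebra_simps)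
  by (cases k) auto
qed

lemma S_deriv_pos:
  fixes m t :: real
  assumes "m \<ge> 2" "n = Suc k" "0 \<le> t" "t \<le> 1/m"
  shows "m*n*t^k + n*m^2 - n*(k*t^(k-1)) > 0"
proof -
  have "k*t^(k-1) < m^2"
  proof (cases k)
    case 0 thus ?thesis using assms by simp
  next
    case (Suc j)
    have "t^j \<le> (1/m)^j" using assms by (simp add: power_mono)
    hence "k*t^j \<le> k*(1/m)^j" by (simp add: mult_left_mono)
    moreover have "k*(1/m)^j < m^2"
    proof -
      have "real k < 2^k" by (metis less_exp of_nat_less_iff of_nat_numeral of_nat_power)
      also have "... \<le> m^k" using assms by (simp add: power_mono)
      also have "... = m^j * m" using Suc by simp
      also have "... \<le> m^j * m^2" using assms by (simp add: power2_eq_square)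
      finally have "real k < m^j*m^2" .
      thus ?thesis using assms by (simp add: field_simps power_divide)
    qed
    ultimately have "k*t^j < m^2" by linarith
    thus ?thesis using Suc by simp
  qed
  hence "n*(k*t^(k-1)) < n*m^2" using assms by simp
  moreover have "m*n*t^k \<ge> 0" using assms by simp
  ultimately show ?thesis by linarith
qed

lemma S_mono:
  fixes m a b :: real
  assumes "m \<ge> 2" "n \<ge> 1" "0 \<le> a" "a < b" "b \<le> 1/m"
  shows "SS m n a < SS m n b"
proof -
  obtain k where n: "n = Suc k" using assms by (cases n) auto
  show ?thesis
    apply (rule DERIV_pos_imp_increasing[OF assms(4)])
    using S_deriv[OF n] S_deriv_pos[OF assms(1) n] assms by (meson order.trans)
qed


lemma deriv_cont_on:
  fixes f :: "real \<Rightarrow> real"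
  assumes "\<And>x. a \<le> x \<Longrightarrow> x \<le> b \<Longrightarrow> (f has_real_derivative f' x) (at x)"
  shows "continuous_on {a..b} f"
  by (rule continuous_at_imp_continuous_on) (metis DERIV_isCont assms atLeastAtMost_iff)

lemma strict_inc_gen:
  fixes f :: "real \<Rightarrow> real"
  assumes "a < b" "\<And>x. a \<le> x \<Longrightarrow> x \<le> b \<Longrightarrow> (f has_real_derivative f' x) (at x)"
    "\<And>x. a < x \<Longrightarrow> x < b \<Longrightarrow> f' x > 0"
  shows "f a < f b"
proof (rule DERIV_pos_imp_increasing_open[OF assms(1)])
  fix x assume "a < x" "x < b"
  hence "(f has_real_derivative f' x) (at x)" "0 < f' x" using assms(2,3)[of x] by auto
  thus "\<exists>y. (f has_real_derivative y) (at x) \<and> 0 < y" by blast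
qed (use assms in \<open>auto intro: deriv_cont_on\<close>)

lemma strict_dec_gen:
  fixes f :: "real \<Rightarrow> real"
  assumes "a < b" "\<And>x. a \<le> x \<Longrightarrow> x \<le> b \<Longrightarrow> (f has_real_derivative f' x) (at x)"
    "\<And>x. a < x \<Longrightarrow> x < b \<Longrightarrow> f' x < 0"
  shows "f a > f b"
proof (rule DERIV_neg_imp_decreasing_open[OF assms(1)])
  fix x assume "a < x" "x < b"
  hence "(f has_real_derivative f' x) (at x)" "f' x < 0" using assms(2,3)[of x] by auto
  thus "\<exists>y. (f has_real_derivative y) (at x) \<and> y < 0" by blast
qed (use assms in \<open>auto intro: deriv_cont_on\<close>)

lemma nondec_gen:
  fixes f :: "real \<Rightarrow> real"
  assumes "a \<le> b" "\<And>x. a \<le> x \<Longrightarrow> x \<le> b \<Longrightarrow> (f has_real_derivative f' x) (at x)"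
    "\<And>x. a \<le> x \<Longrightarrow> x \<le> b \<Longrightarrow> f' x \<ge> 0"
  shows "f a \<le> f b"
  by (rule DERIV_nonneg_imp_nondecreasing[OF assms(1)]) (use assms in auto)

lemma S_sign:
  fixes m :: real
  assumes "m \<ge> 2" "n \<ge> 1"
  shows "\<exists>t0. 0 < t0 \<and> t0 \<le> 1/m \<and> (\<forall>t. 0 < t \<and> t < t0 \<longrightarrow> SS m n t < 0)
     \<and> (\<forall>t. t0 < t \<and> t \<le> 1 \<longrightarrow> SS m n t > 0)"
proof -
  have c: "continuous_on {0..1/m} (SS m n)"
    unfolding SS_def[abs_def] by (intro continuous_intros)
  obtain t0 where t0: "0 \<le> t0" "t0 \<le> 1/m" "SS m n t0 = 0"
    using IVT'[of "SS m n" 0 0 "1/m", OF _ _ _ c] S_neg0[OF assms] S_nonneg[OF assms] assms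
    by auto
  have "t0 \<noteq> 0" using t0 S_neg0[OF assms] by auto
  hence pos: "0 < t0" using t0 by simp
  show ?thesis
  proof (intro exI conjI allI impI)
    fix t assume "0 < t \<and> t < t0"
    thus "SS m n t < 0" using S_mono[OF assms, of t t0] t0 by auto
  next
    fix t assume a: "t0 < t \<and> t \<le> 1"
    show "SS m n t > 0"
    proof (cases "t \<le> 1/m")
      case True thus ?thesis using S_mono[OF assms, of t0 t] t0 a by auto
    next
      case False thus ?thesis using S_pos[OF assms(1) _ _ assms(2)] a by auto
    qed
  qed (use pos t0 in auto)
qed

lemma K_lower:
  fixes m t :: real
  assumes "m \<ge> 0" "0 < t" "t < 1" "n \<ge> 1"
  shows "KK m n t \<ge> - ln t"
proof -
  have l: "- ln t > 0" using assms by simp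
  have tn: "0 < 1 - t^n" "1 - t^n \<le> 1" using assms by (auto simp: power_less_one_iff)
  have p: "(1+m*t)^n \<ge> 1" using assms by (simp add: one_le_power)
  have "(1+m*t)^n/(1-t^n) \<ge> 1" using tn p by (simp add: le_divide_eq)
  hence "- ln t * 1 \<le> - ln t * ((1+m*t)^n/(1-t^n))" using l by (intro mult_left_mono) auto
  thus ?thesis unfolding KK_def by simp
qed

lemma Z_one: "ZZ m n 1 = 0" unfolding ZZ_def by simp

lemma KK_deriv_factor_pos:
  fixes m t :: real
  assumes "0 < t" "t < 1" "m \<ge> 0" "n \<ge> 1"
  shows "(1+m*t)^(n-1)*(m*t+t^n)/(t*(1-t^n)^2) > 0"
proof -
  have B: "m*t+t^n > 0" using assms by (simp add: add_nonneg_pos)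
  have tn: "t^n < 1" using assms by (simp add: power_less_one_iff)
  show ?thesis using B tn assms by (intro divide_pos_pos mult_pos_pos) auto
qed

lemma KK_deriv':
  fixes m t :: real
  assumes "0 < t" "t < 1" "m \<ge> 0" "n \<ge> 1"
  shows "(KK m n has_real_derivative
     - ((1+m*t)^(n-1)*(m*t+t^n)/(t*(1-t^n)^2)) * ZZ m n t) (at t)"
proof -
  have "- ((1+m*t)^(n-1)*(m*t+t^n)*ZZ m n t)/(t*(1-t^n)^2) =
     - ((1+m*t)^(n-1)*(m*t+t^n)/(t*(1-t^n)^2)) * ZZ m n t" by simp
  thus ?thesis using KK_deriv[OF assms] by simp
qed

lemma neg_mul_nonneg: "(c::real) > 0 \<Longrightarrow> z \<le> 0 \<Longrightarrow> - c * z \<ge> 0"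
  by (smt (verit) mult_nonneg_nonpos mult_minus_left)

lemma neg_mul_pos: "(c::real) > 0 \<Longrightarrow> z < 0 \<Longrightarrow> - c * z > 0"
  by (simp add: mult_pos_neg)

lemma neg_mul_neg: "(c::real) > 0 \<Longrightarrow> z > 0 \<Longrightarrow> - c * z < 0"
  by simp

lemma Z_shape:
  fixes m :: real
  assumes m: "m \<ge> 2" and n: "n \<ge> 1"
  shows "\<exists>T. 0 < T \<and> T < 1 \<and> (\<forall>t. 0 < t \<and> t < T \<longrightarrow> ZZ m n t > 0)
     \<and> (\<forall>t. T < t \<and> t < 1 \<longrightarrow> ZZ m n t < 0)"
proof -
  obtain t0 where t0: "0 < t0" "t0 \<le> 1/m" "\<And>t. 0 < t \<Longrightarrow> t < t0 \<Longrightarrow> SS m n t < 0"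
     "\<And>t. t0 < t \<Longrightarrow> t \<le> 1 \<Longrightarrow> SS m n t > 0"
    using S_sign[OF m n] by blast
  have t0h: "t0 \<le> 1/2" using t0(2) m by (smt (verit) frac_le)
  have dZ: "\<And>x. 0 < x \<Longrightarrow> (ZZ m n has_real_derivative (1-x^n)*SS m n x/(m*x+x^n)^2) (at x)"
    using ZZ_deriv m n by simp
  have sgn: "\<And>x. 0 < x \<Longrightarrow> x < 1 \<Longrightarrow> (1-x^n)*SS m n x/(m*x+x^n)^2 > 0 \<longleftrightarrow> SS m n x > 0"
     "\<And>x. 0 < x \<Longrightarrow> x < 1 \<Longrightarrow> (1-x^n)*SS m n x/(m*x+x^n)^2 < 0 \<longleftrightarrow> SS m n x < 0"
  proof -
    fix x :: real assume x: "0 < x" "x < 1"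
    have a: "1 - x^n > 0" using x n by (simp add: power_less_one_iff)
    have "m*x+x^n > 0" by (intro add_nonneg_pos) (use x m in auto)
    hence b: "(m*x+x^n)^2 > 0" by simp
    show "(1-x^n)*SS m n x/(m*x+x^n)^2 > 0 \<longleftrightarrow> SS m n x > 0"
      using a b by (simp add: zero_less_divide_iff zero_less_mult_iff)
    show "(1-x^n)*SS m n x/(m*x+x^n)^2 < 0 \<longleftrightarrow> SS m n x < 0"
      using a b by (simp add: divide_less_0_iff mult_less_0_iff)
  qed
  have Zinc: "\<And>a b. t0 \<le> a \<Longrightarrow> a < b \<Longrightarrow> b \<le> 1 \<Longrightarrow> ZZ m n a < ZZ m n b"
  proof -
    fix a b :: real assume ab: "t0 \<le> a" "a < b" "b \<le> 1"
    show "ZZ m n a < ZZ m n b"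
      apply (rule strict_inc_gen[OF ab(2)])
       apply (rule dZ) using ab t0 apply linarith
      apply (subst sgn(1)) using ab t0 by auto
  qed
  have Zdec: "\<And>a b. 0 < a \<Longrightarrow> a < b \<Longrightarrow> b \<le> t0 \<Longrightarrow> ZZ m n a > ZZ m n b"
  proof -
    fix a b :: real assume ab: "0 < a" "a < b" "b \<le> t0"
    show "ZZ m n a > ZZ m n b"
      apply (rule strict_dec_gen[OF ab(2)])
       apply (rule dZ) using ab apply linarith
      apply (subst sgn(2)) using ab t0h t0 by auto
  qed
  have Zneg: "\<And>t. t0 \<le> t \<Longrightarrow> t < 1 \<Longrightarrow> ZZ m n t < 0"
    using Zinc[of _ 1] Z_one by fastforce
  have "\<exists>a. 0 < a \<and> a < t0 \<and> ZZ m n a > 0"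
  proof (rule ccontr)
    assume H: "\<not> ?thesis"
    have Zle: "\<And>t. 0 < t \<Longrightarrow> t < 1 \<Longrightarrow> ZZ m n t \<le> 0"
    proof -
      fix t :: real assume tt: "0 < t" "t < 1"
      show "ZZ m n t \<le> 0"
      proof (cases "t < t0")
        case True thus ?thesis using H tt by (meson not_le_imp_less)
      next
        case False thus ?thesis using Zneg[of t] tt by simp
      qed
    qed
    define c where "c = KK m n (1/2)"
    define e where "e = min (1/4) (exp (-(\<bar>c\<bar>+1)))"
    have e: "0 < e" "e < 1/2" "e \<le> exp (-(\<bar>c\<bar>+1))" unfolding e_def by auto
    have "- ln e \<ge> \<bar>c\<bar> + 1"
    proof -
      have "ln e \<le> ln (exp (-(\<bar>c\<bar>+1)))" using e by (subst ln_le_cancel_iff) auto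
      thus ?thesis by simp
    qed
    hence "KK m n e > c" using K_lower[of m e n] e m n by linarith
    moreover have "KK m n e \<le> KK m n (1/2)"
    proof (rule nondec_gen[of e "1/2"])
      fix x assume x: "e \<le> x" "x \<le> 1/2"
      show "(KK m n has_real_derivative
         - ((1+m*x)^(n-1)*(m*x+x^n)/(x*(1-x^n)^2)) * ZZ m n x) (at x)"
        using KK_deriv'[of x m n] x e m n by auto
      have "(1+m*x)^(n-1)*(m*x+x^n)/(x*(1-x^n)^2) > 0"
        using KK_deriv_factor_pos[of x m n] x e m n by auto
      moreover have "ZZ m n x \<le> 0" using Zle x e by auto
      ultimately show "- ((1+m*x)^(n-1)*(m*x+x^n)/(x*(1-x^n)^2)) * ZZ m n x \<ge> 0"
        using neg_mul_nonneg by blast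
    qed (use e in auto)
    ultimately show False unfolding c_def by linarith
  qed
  then obtain a where a: "0 < a" "a < t0" "ZZ m n a > 0" by blast
  have cZ: "continuous_on {a..t0} (ZZ m n)"
    by (rule deriv_cont_on[of a t0 "ZZ m n" "\<lambda>x. (1-x^n)*SS m n x/(m*x+x^n)^2"]) (use dZ a in auto)
  have Zt0: "ZZ m n t0 < 0" using Zneg t0h t0 by auto
  obtain T where T: "a \<le> T" "T \<le> t0" "ZZ m n T = 0"
    using IVT2'[of "ZZ m n" t0 0 a, OF _ _ _ cZ] a Zt0 by auto
  have T': "a < T" "T < t0" using T a Zt0 by (auto simp: order.order_iff_strict)
  show ?thesis
  proof (intro exI conjI allI impI)
    fix t assume "0 < t \<and> t < T"
    thus "ZZ m n t > 0" using Zdec[of t T] T T' by auto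
  next
    fix t assume tt: "T < t \<and> t < 1"
    show "ZZ m n t < 0"
    proof (cases "t \<le> t0")
      case True thus ?thesis using Zdec[of T t] T T' a tt by auto
    next
      case False thus ?thesis using Zneg tt by auto
    qed
  qed (use T' a t0h in auto)
qed



lemma K_shape:
  fixes m :: real
  assumes m: "m \<ge> 2" and n: "n \<ge> 1"
  shows "\<exists>T. 0 < T \<and> T < 1 \<and> (\<forall>a b. 0 < a \<and> a < b \<and> b \<le> T \<longrightarrow> KK m n b < KK m n a)
     \<and> (\<forall>a b. T \<le> a \<and> a < b \<and> b < 1 \<longrightarrow> KK m n a < KK m n b)"
proof -
  obtain T where T: "0 < T" "T < 1" "\<And>t. 0 < t \<Longrightarrow> t < T \<Longrightarrow> ZZ m n t > 0"
     "\<And>t. T < t \<Longrightarrow> t < 1 \<Longrightarrow> ZZ m n t < 0"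
    using Z_shape[OF m n] by blast
  define c where "c = (\<lambda>x. (1+m*x)^(n-1)*(m*x+x^n)/(x*(1-x^n)^2))"
  have dK: "\<And>x. 0 < x \<Longrightarrow> x < 1 \<Longrightarrow> (KK m n has_real_derivative - c x * ZZ m n x) (at x)"
    unfolding c_def using KK_deriv' m n by simp
  have cp: "\<And>x. 0 < x \<Longrightarrow> x < 1 \<Longrightarrow> c x > 0"
    unfolding c_def using KK_deriv_factor_pos m n by simp
  show ?thesis
  proof (intro exI conjI allI impI)
    fix a b assume ab: "0 < a \<and> a < b \<and> b \<le> T"
    show "KK m n b < KK m n a"
      apply (rule strict_dec_gen[of a b _ "\<lambda>x. - c x * ZZ m n x"])
      using ab T apply simp
      using ab T apply (intro dK; simp)
      using ab T by (intro neg_mul_neg cp T(3); simp)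
  next
    fix a b assume ab: "T \<le> a \<and> a < b \<and> b < 1"
    show "KK m n a < KK m n b"
      apply (rule strict_inc_gen[of a b _ "\<lambda>x. - c x * ZZ m n x"])
      using ab T apply simp
      using ab T apply (intro dK; simp)
      using ab T by (intro neg_mul_pos cp T(4); simp)
  qed (use T in auto)
qed

lemma div_div_same: "(z::real) \<noteq> 0 \<Longrightarrow> (a/z)/(b/z) = a/b"
  by (cases "b = 0") (auto simp: field_simps)

lemma K_lim:
  fixes m :: real
  assumes m: "m \<ge> 0" and n: "n \<ge> 1"
  shows "(KK m n \<longlongrightarrow> (1+m)^n/n) (at_left 1)"
proof -
  have "(ln has_real_derivative 1) (at 1)" using DERIV_ln[of 1] by simp
  hence "((\<lambda>y::real. (ln y - ln 1)/(y - 1)) \<longlongrightarrow> 1) (at 1)"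
    by (simp only: has_field_derivative_iff)
  hence l1: "((\<lambda>y::real. ln y/(y - 1)) \<longlongrightarrow> 1) (at 1)" by simp
  have "((\<lambda>y::real. (y^n - 1^n)/(y - 1)) \<longlongrightarrow> real n * 1^(n - Suc 0)) (at 1)"
    using DERIV_pow[of n 1 UNIV] by (simp only: has_field_derivative_iff)
  hence l2: "((\<lambda>y::real. (y^n - 1)/(y - 1)) \<longlongrightarrow> real n) (at 1)" by simp
  have l3: "((\<lambda>y. (1+m*y)^n) \<longlongrightarrow> (1+m)^n) (at 1)"
    by (auto intro!: tendsto_eq_intros)
  have "((\<lambda>y. (ln y/(y - 1)) / ((y^n - 1)/(y - 1)) * (1+m*y)^n) \<longlongrightarrow> 1 / real n * (1+m)^n) (at 1)"
    by (intro tendsto_mult tendsto_divide l1 l2 l3) (use n in auto)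
  hence "((\<lambda>y. (ln y/(y - 1)) / ((y^n - 1)/(y - 1)) * (1+m*y)^n) \<longlongrightarrow> 1 / real n * (1+m)^n) (at_left 1)"
    using tendsto_mono[OF at_le[of "{..<1}" UNIV]] by blast
  hence l4: "((\<lambda>y. (ln y/(y - 1)) / ((y^n - 1)/(y - 1)) * (1+m*y)^n) \<longlongrightarrow> (1+m)^n/n) (at_left 1)"
    by simp
  have ev: "eventually (\<lambda>y. (ln y/(y - 1)) / ((y^n - 1)/(y - 1)) * (1+m*y)^n = KK m n y) (at_left 1)"
  proof -
    have "eventually (\<lambda>y. y \<in> {0<..<1}) (at_left (1::real))" by (rule eventually_at_left_real) simp
    thus ?thesis
    proof (rule eventually_mono)
      fix y :: real assume y: "y \<in> {0<..<1}"
      have "y^n < 1" using y n by (simp add: power_less_one_iff)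
      hence "y^n - 1 \<noteq> 0" "1 - y^n \<noteq> 0" by auto
      moreover have "y - 1 \<noteq> 0" using y by auto
      ultimately have "(ln y/(y - 1)) / ((y^n - 1)/(y - 1)) = ln y / (y^n - 1)"
        using div_div_same by blast
      also have "... = - ln y / (1 - y^n)"
        by (metis minus_diff_eq minus_divide_divide)
      finally show "(ln y/(y - 1)) / ((y^n - 1)/(y - 1)) * (1+m*y)^n = KK m n y"
        unfolding KK_def by simp
    qed
  qed
  show ?thesis using tendsto_cong[OF ev] l4 by simp
qed



lemma Delta_t:
  fixes m u :: real
  assumes "m \<ge> 0" "0 \<le> u" "u < 1" "real q = 1 + m"
  shows "mf_Delta \<beta> q z u = - \<beta> * (1 - ((1-u)/(1+m*u))^(z-1)) / (1 + m*((1-u)/(1+m*u)))^(z-1)"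
proof -
  define a where "a = 1 + m*u"
  have a: "a > 0" unfolding a_def using assms by (simp add: add_pos_nonneg)
  have e1: "1 + m*((1-u)/(1+m*u)) = (1+m)/a" unfolding a_def using a a_def
    by (simp add: field_simps)
  have qp: "(1+m)^(z-1) > 0" using assms by simp
  have p1: "((1-u)/a)^(z-1) = (1-u)^(z-1)/a^(z-1)" "((1+m)/a)^(z-1) = (1+m)^(z-1)/a^(z-1)"
    by (simp_all add: power_divide)
  have p2: "1 - (1-u)^(z-1)/a^(z-1) = (a^(z-1) - (1-u)^(z-1))/a^(z-1)"
    using a by (simp add: diff_divide_distrib)
  have "- \<beta> * (1 - ((1-u)/a)^(z-1)) / ((1+m)/a)^(z-1)
      = - \<beta> * ((a^(z-1) - (1-u)^(z-1))/a^(z-1)) / ((1+m)^(z-1)/a^(z-1))"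
    unfolding p1 p2 ..
  also have "... = - \<beta> * (a^(z-1) - (1-u)^(z-1)) / (1+m)^(z-1)"
  proof -
    have "a^(z-1) \<noteq> 0" using a by simp
    from div_div_same[OF this, of "- \<beta> * (a^(z-1) - (1-u)^(z-1))" "(1+m)^(z-1)"]
    show ?thesis by simp
  qed
  finally have ch: "- \<beta> * (1 - ((1-u)/a)^(z-1)) / ((1+m)/a)^(z-1) = - \<beta> * (a^(z-1) - (1-u)^(z-1)) / (1+m)^(z-1)" .
  have d: "mf_Delta \<beta> q z u = - \<beta> * (a^(z-1) - (1-u)^(z-1)) / (1+m)^(z-1)"
    unfolding mf_Delta_def a_def using assms(4) by simp
  have g: "(1-u)/(1+m*u) = (1-u)/a" "1 + m*((1-u)/(1+m*u)) = (1+m)/a" using e1 a_def by auto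
  have g3: "1 + m*((1-u)/a) = (1+m)/a" using e1 a_def by simp
  show ?thesis unfolding d g(1) g3 using ch by simp
qed

lemma eq_aux: "(c::real) > 0 \<Longrightarrow> (- b * c = X) \<longleftrightarrow> (- X / c = b)"
  by (auto simp: field_simps)

lemma sol_char:
  fixes q z :: nat and m :: real and n :: nat
  assumes "q > 2" "z \<ge> 2" "m = real q - 1" "n = z - 1"
  shows "u \<in> mf_solutions \<beta> q z \<longleftrightarrow> (u = 0 \<or> (0 < u \<and> u < 1 \<and> KK m n ((1-u)/(1+m*u)) = \<beta>))"
proof -
  have m: "m \<ge> 2" using assms by simp
  have n: "n \<ge> 1" using assms by simp
  have q: "real q = 1 + m" using assms by simp
  have mq: "real q - 1 = m" using assms by simp
  show ?thesis
  proof (cases "0 \<le> u \<and> u < 1")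
    case False
    thus ?thesis unfolding mf_solutions_def by auto
  next
    case True
    hence u: "0 \<le> u" "u < 1" by auto
    define t where "t = (1-u)/(1+m*u)"
    have a: "1 + m*u > 0" using u m by (simp add: add_pos_nonneg)
    have t0: "t > 0" unfolding t_def using a u by simp
    have t1: "t \<le> 1" unfolding t_def using a u m by (simp add: field_simps)
    have "t < 1 \<longleftrightarrow> 1 - u < 1 + m*u" unfolding t_def using a by (simp add: divide_less_eq)
    also have "... \<longleftrightarrow> 0 < u*(1+m)" by (simp add: algebra_simps)
    also have "... \<longleftrightarrow> u > 0" using m u by (simp add: zero_less_mult_iff)
    finally have tl: "t < 1 \<longleftrightarrow> u > 0" .
    define D where "D = mf_Delta \<beta> q z u"
    have D: "D = - \<beta> * (1 - t^n) / (1 + m*t)^n"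
      unfolding D_def t_def assms(4) using Delta_t[OF _ u q] m by simp
    define E where "E = exp D"
    have E: "E > 0" unfolding E_def by simp
    have dpos: "1 + m*E > 0" using E m by (simp add: add_pos_nonneg)
    have "u = (1 - E)/(1 + m*E) \<longleftrightarrow> u*(1+m*E) = 1 - E" using dpos by (simp add: field_simps)
    also have "... \<longleftrightarrow> E*(1+m*u) = 1 - u" by (auto simp: algebra_simps)
    also have "... \<longleftrightarrow> E = t" unfolding t_def using a by (simp add: field_simps)
    also have "... \<longleftrightarrow> D = ln t" unfolding E_def using t0 by auto
    finally have eq: "u \<in> mf_solutions \<beta> q z \<longleftrightarrow> D = ln t"
      unfolding mf_solutions_def D_def E_def mq using u by auto
    have mt: "(1 + m*t)^n > 0" using m t0 by (simp add: add_pos_nonneg)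
    show ?thesis
    proof (cases "u = 0")
      case True
      hence "t = 1" unfolding t_def by simp
      thus ?thesis using eq D True by simp
    next
      case False
      hence up: "u > 0" using u by simp
      hence tt: "t < 1" using tl by simp
      have tn: "1 - t^n > 0" using tt t0 n by (simp add: power_less_one_iff)
      have Y0: "1 + m*t \<noteq> 0" using m t0 by (smt (verit) mult_nonneg_nonneg)
      have "D = ln t \<longleftrightarrow> D * (1 + m*t)^n = ln t * (1 + m*t)^n" using Y0 by simp
      moreover have "D * (1 + m*t)^n = - \<beta> * (1 - t^n)" using D Y0 by simp
      ultimately have "D = ln t \<longleftrightarrow> - \<beta> * (1 - t^n) = ln t * (1 + m*t)^n" by simp
      also have "... \<longleftrightarrow> - (ln t * (1 + m*t)^n) / (1 - t^n) = \<beta>" using tn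
        by (rule eq_aux)
      also have "... \<longleftrightarrow> KK m n t = \<beta>" unfolding KK_def by simp
      finally show ?thesis using eq up u unfolding t_def by auto
    qed
  qed
qed


definition phi :: "real \<Rightarrow> real \<Rightarrow> real" where "phi m t = (1-t)/(1+m*t)"

lemma phi_props:
  assumes "m \<ge> 0" "0 < t" "t < 1"
  shows "0 < phi m t" "phi m t < 1" "phi m (phi m t) = t"
proof -
  have a: "1 + m*t > 0" using assms by (simp add: add_pos_nonneg)
  show "0 < phi m t" unfolding phi_def using a assms by simp
  have "1 - t < 1 + m*t" using assms by (smt (verit) mult_nonneg_nonneg)
  thus "phi m t < 1" unfolding phi_def using a by simp
  have b: "1 + m*((1-t)/(1+m*t)) = (1+m)/(1+m*t)" using a by (simp add: field_simps)
  have c: "1 - (1-t)/(1+m*t) = (t*(1+m))/(1+m*t)" using a by (simp add: field_simps)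
  have "1 + m > 0" using assms by simp
  hence "(t*(1+m))/(1+m) = t" by simp
  thus "phi m (phi m t) = t" unfolding phi_def b c using div_div_same[of "1+m*t" "t*(1+m)" "1+m"] a by simp
qed

lemma phi_mono:
  assumes "m \<ge> 0" "0 \<le> s" "s < t"
  shows "phi m t < phi m s"
proof -
  have a: "1 + m*t > 0" "1 + m*s > 0" using assms by (simp_all add: add_pos_nonneg)
  have "(1-t)*(1+m*s) < (1-s)*(1+m*t)"
  proof -
    have "(1-s)*(1+m*t) - (1-t)*(1+m*s) = (t - s)*(1+m)" by (simp add: algebra_simps)
    moreover have "(t - s)*(1+m) > 0" using assms by simp
    ultimately show ?thesis by linarith
  qed
  thus ?thesis unfolding phi_def using a by (simp add: divide_less_eq less_divide_eq mult.commute)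
qed

lemma sol_image:
  fixes q z :: nat and m :: real and n :: nat
  assumes "q > 2" "z \<ge> 2" "m = real q - 1" "n = z - 1"
  shows "mf_solutions \<beta> q z = insert 0 (phi m ` {t. 0 < t \<and> t < 1 \<and> KK m n t = \<beta>})"
proof -
  have m: "m \<ge> 0" using assms by simp
  show ?thesis
  proof (intro set_eqI iffI)
    fix u assume "u \<in> mf_solutions \<beta> q z"
    hence "u = 0 \<or> (0 < u \<and> u < 1 \<and> KK m n (phi m u) = \<beta>)"
      using sol_char[OF assms] unfolding phi_def by blast
    thus "u \<in> insert 0 (phi m ` {t. 0 < t \<and> t < 1 \<and> KK m n t = \<beta>})"
    proof
      assume u: "0 < u \<and> u < 1 \<and> KK m n (phi m u) = \<beta>"
      hence "u = phi m (phi m u)" using phi_props[OF m] by simp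
      moreover have "phi m u \<in> {t. 0 < t \<and> t < 1 \<and> KK m n t = \<beta>}"
        using phi_props[OF m] u by auto
      ultimately show ?thesis by blast
    qed simp
  next
    fix u assume "u \<in> insert 0 (phi m ` {t. 0 < t \<and> t < 1 \<and> KK m n t = \<beta>})"
    hence "u = 0 \<or> (0 < u \<and> u < 1 \<and> KK m n (phi m u) = \<beta>)"
      using phi_props[OF m] by auto
    thus "u \<in> mf_solutions \<beta> q z"
      using sol_char[OF assms] unfolding phi_def by blast
  qed
qed

theorem lemma5p4:
  fixes q z :: nat
  assumes "q > 2" and "z \<ge> 2"
  shows "\<exists>\<beta>0 \<beta>1. 0 < \<beta>0 \<and> \<beta>0 < \<beta>1 \<and>
    (\<forall>\<beta>. 0 < \<beta> \<and> \<beta> < \<beta>0 \<longrightarrow> mf_solutions \<beta> q z = {0}) \<and>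
    (\<forall>\<beta>. \<beta>0 < \<beta> \<and> \<beta> < \<beta>1 \<longrightarrow>
       (\<exists>u1 u2. 0 < u1 \<and> u1 < u2 \<and> u2 < 1 \<and> mf_solutions \<beta> q z = {0, u1, u2})) \<and>
    (\<forall>\<beta>. \<beta> = \<beta>0 \<or> \<beta> \<ge> \<beta>1 \<longrightarrow>
       (\<exists>u2. 0 < u2 \<and> u2 < 1 \<and> mf_solutions \<beta> q z = {0, u2}))"
proof -
  define m where "m = real q - 1"
  define n where "n = z - 1"
  have m: "m \<ge> 2" using assms unfolding m_def by simp
  have m0: "m \<ge> 0" using m by simp
  have n: "n \<ge> 1" using assms unfolding n_def by simp
  have SI: "\<And>\<beta>. mf_solutions \<beta> q z = insert 0 (phi m ` {t. 0 < t \<and> t < 1 \<and> KK m n t = \<beta>})"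
    using sol_image[OF assms m_def n_def] by blast
  obtain T where T: "0 < T" "T < 1"
    and Kdec: "\<And>a b. 0 < a \<Longrightarrow> a < b \<Longrightarrow> b \<le> T \<Longrightarrow> KK m n b < KK m n a"
    and Kinc: "\<And>a b. T \<le> a \<Longrightarrow> a < b \<Longrightarrow> b < 1 \<Longrightarrow> KK m n a < KK m n b"
    using K_shape[OF m n] by blast
  define L where "L = (1+m)^n / real n"
  have lim: "(KK m n \<longlongrightarrow> L) (at_left 1)" unfolding L_def using K_lim[OF m0 n] .
  have dK: "\<And>x. 0 < x \<Longrightarrow> x < 1 \<Longrightarrow> (KK m n has_real_derivative
     - ((1+m*x)^(n-1)*(m*x+x^n)/(x*(1-x^n)^2)) * ZZ m n x) (at x)"
    using KK_deriv' m0 n by blast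
  have contK: "\<And>a b. 0 < a \<Longrightarrow> b < 1 \<Longrightarrow> continuous_on {a..b} (KK m n)"
  proof -
    fix a b :: real assume ab: "0 < a" "b < 1"
    show "continuous_on {a..b} (KK m n)"
      by (rule deriv_cont_on[of a b _ "\<lambda>x. - ((1+m*x)^(n-1)*(m*x+x^n)/(x*(1-x^n)^2)) * ZZ m n x"])
         (use dK ab in auto)
  qed
  have KltL: "\<And>t. T \<le> t \<Longrightarrow> t < 1 \<Longrightarrow> KK m n t < L"
  proof -
    fix t assume t: "T \<le> t" "t < 1"
    define b where "b = (t+1)/2"
    have b: "t < b" "b < 1" unfolding b_def using t by auto
    have "KK m n b \<le> L"
    proof (rule tendsto_lowerbound[OF lim])
      have "eventually (\<lambda>y. y \<in> {b<..<1}) (at_left (1::real))" by (rule eventually_at_left_real) (use b in simp)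
      thus "eventually (\<lambda>y. KK m n b \<le> KK m n y) (at_left 1)"
        by (rule eventually_mono) (use Kinc b t in \<open>auto intro: less_imp_le\<close>)
    qed simp
    thus "KK m n t < L" using Kinc[of t b] t b by simp
  qed
  have Kpos: "\<And>t. 0 < t \<Longrightarrow> t < 1 \<Longrightarrow> KK m n t > 0"
    using K_lower[OF m0 _ _ n] by (smt (verit) ln_less_zero)
  have Kge: "\<And>t. 0 < t \<Longrightarrow> t < 1 \<Longrightarrow> t \<noteq> T \<Longrightarrow> KK m n t > KK m n T"
    using Kdec Kinc T by (metis linorder_neqE_linordered_idom order.refl)
  have low: "\<And>\<beta>. \<beta> > KK m n T \<Longrightarrow> \<exists>t1. 0 < t1 \<and> t1 < T \<and> KK m n t1 = \<beta>"
  proof -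
    fix \<beta> assume \<beta>: "\<beta> > KK m n T"
    define a where "a = min (T/2) (exp (-(\<bar>\<beta>\<bar>+1)))"
    have a: "0 < a" "a < T" "a \<le> exp (-(\<bar>\<beta>\<bar>+1))" unfolding a_def using T by auto
    have "ln a \<le> ln (exp (-(\<bar>\<beta>\<bar>+1)))" using a by (subst ln_le_cancel_iff) auto
    hence "KK m n a > \<beta>" using K_lower[OF m0, of a n] a T n by simp
    then obtain t1 where t1: "a \<le> t1" "t1 \<le> T" "KK m n t1 = \<beta>"
      using IVT2'[of "KK m n" T \<beta> a, OF _ _ _ contK] a T \<beta> by auto
    have "t1 \<noteq> T" using t1 \<beta> by auto
    thus "\<exists>t1. 0 < t1 \<and> t1 < T \<and> KK m n t1 = \<beta>" using t1 a by (intro exI[of _ t1]) auto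
  qed
  have high: "\<And>\<beta>. \<beta> > KK m n T \<Longrightarrow> \<beta> < L \<Longrightarrow> \<exists>t2. T < t2 \<and> t2 < 1 \<and> KK m n t2 = \<beta>"
  proof -
    fix \<beta> assume \<beta>: "\<beta> > KK m n T" "\<beta> < L"
    have e1: "eventually (\<lambda>y. KK m n y > \<beta>) (at_left 1)" using order_tendstoD(1)[OF lim \<beta>(2)] .
    have e2: "eventually (\<lambda>y. y \<in> {T<..<1}) (at_left (1::real))" by (rule eventually_at_left_real) (use T in simp)
    obtain b where b: "KK m n b > \<beta>" "b \<in> {T<..<1}"
      using eventually_happens'[OF _ eventually_conj[OF e1 e2]] by auto
    obtain t2 where t2: "T \<le> t2" "t2 \<le> b" "KK m n t2 = \<beta>"
      using IVT'[of "KK m n" T \<beta> b, OF _ _ _ contK] b T \<beta> by auto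
    have "t2 \<noteq> T" using t2 \<beta> by auto
    thus "\<exists>t2. T < t2 \<and> t2 < 1 \<and> KK m n t2 = \<beta>" using t2 b by (intro exI[of _ t2]) auto
  qed
  have uniq_low: "\<And>s t. 0 < s \<Longrightarrow> s \<le> T \<Longrightarrow> 0 < t \<Longrightarrow> t \<le> T \<Longrightarrow> KK m n s = KK m n t \<Longrightarrow> s = t"
    using Kdec by (metis linorder_neqE_linordered_idom order.strict_iff_not)
  have uniq_high: "\<And>s t. T \<le> s \<Longrightarrow> s < 1 \<Longrightarrow> T \<le> t \<Longrightarrow> t < 1 \<Longrightarrow> KK m n s = KK m n t \<Longrightarrow> s = t"
    using Kinc by (metis linorder_neqE_linordered_idom order.strict_iff_not)
  have TL: "KK m n T < L" using KltL T by simp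
  show ?thesis
  proof (rule exI[of _ "KK m n T"], rule exI[of _ L], intro conjI allI impI)
    show "0 < KK m n T" using Kpos T by simp
    show "KK m n T < L" by (fact TL)
  next
    fix \<beta> assume \<beta>: "0 < \<beta> \<and> \<beta> < KK m n T"
    have E: "{t. 0 < t \<and> t < 1 \<and> KK m n t = \<beta>} = {}"
      using Kge \<beta> by (smt (verit) empty_Collect_eq)
    show "mf_solutions \<beta> q z = {0}" unfolding SI E by simp
  next
    fix \<beta> assume \<beta>: "KK m n T < \<beta> \<and> \<beta> < L"
    obtain t1 where t1: "0 < t1" "t1 < T" "KK m n t1 = \<beta>" using low \<beta> by blast
    obtain t2 where t2: "T < t2" "t2 < 1" "KK m n t2 = \<beta>" using high \<beta> by blast
    have S: "{t. 0 < t \<and> t < 1 \<and> KK m n t = \<beta>} = {t1, t2}"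
    proof (intro set_eqI iffI)
      fix t assume "t \<in> {t. 0 < t \<and> t < 1 \<and> KK m n t = \<beta>}"
      hence t: "0 < t" "t < 1" "KK m n t = \<beta>" by auto
      show "t \<in> {t1, t2}"
      proof (cases "t \<le> T")
        case True thus ?thesis using uniq_low[of t t1] t t1 by auto
      next
        case False thus ?thesis using uniq_high[of t t2] t t2 by auto
      qed
    qed (use t1 t2 T in auto)
    have p1: "0 < phi m t2" "phi m t1 < 1" using phi_props[OF m0] t1 t2 T by auto
    have p2: "phi m t2 < phi m t1" using phi_mono[OF m0, of t1 t2] t1 t2 by simp
    show "\<exists>u1 u2. 0 < u1 \<and> u1 < u2 \<and> u2 < 1 \<and> mf_solutions \<beta> q z = {0, u1, u2}"
      by (rule exI[of _ "phi m t2"], rule exI[of _ "phi m t1"]) (use p1 p2 SI S in auto)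
  next
    fix \<beta> assume \<beta>: "\<beta> = KK m n T \<or> L \<le> \<beta>"
    show "\<exists>u2. 0 < u2 \<and> u2 < 1 \<and> mf_solutions \<beta> q z = {0, u2}"
    proof (cases "\<beta> = KK m n T")
      case True
      have S: "{t. 0 < t \<and> t < 1 \<and> KK m n t = \<beta>} = {T}"
        using Kge True T by force
      show ?thesis
        by (rule exI[of _ "phi m T"]) (use phi_props[OF m0 T] SI S in auto)
    next
      case False
      hence \<beta>L: "L \<le> \<beta>" using \<beta> by simp
      obtain t1 where t1: "0 < t1" "t1 < T" "KK m n t1 = \<beta>" using low[of \<beta>] \<beta>L TL by auto
      have S: "{t. 0 < t \<and> t < 1 \<and> KK m n t = \<beta>} = {t1}"
      proof (intro set_eqI iffI)
        fix t assume "t \<in> {t. 0 < t \<and> t < 1 \<and> KK m n t = \<beta>}"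
        hence t: "0 < t" "t < 1" "KK m n t = \<beta>" by auto
        have "t \<le> T" using KltL[of t] t \<beta>L by force
        thus "t \<in> {t1}" using uniq_low[of t t1] t t1 by auto
      qed (use t1 T in auto)
      show ?thesis
        by (rule exI[of _ "phi m t1"]) (use phi_props[OF m0] t1 T SI S in auto)
    qed
  qed
qed

end
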